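(* Let $(\Re,\oplus,\circ)$ be a commutative Krasner hyperring with identity $1\neq 0$, let $N$ be a proper hyperideal of $\Re$, and let $\phi:L(\Re)\to L(\Re)\cup\{\emptyset\}$ be a function with $\phi(N)\subseteq N$. Then the following are equivalent: (i) $N$ is a $\phi$-prime hyperideal of $\Re$; (ii) for every $a\in\Re- N$, $(N:a)=N\cup(\phi(N):a)$; (iii) for every $a\in\Re- N$, $(N:a)=N$ or $(N:a)=(\phi(N):a)$; (iv) for all hyperideals $K,L$ of $\Re$ with $K\circ L\subseteq N$ and $K\circ L\not\subseteq\phi(N)$, we have $K\subseteq N$ or $L\subseteq N$.
   Context: A commutative Krasner hyperring with identity is $(\Re,\oplus,\circ)$ where $(\Re,\oplus)$ is a canonical hypergroup (the hyperoperation $\oplus:\Re\times\Re\to P^*(\Re)$ is associative and commutative; there is $0$ with $a\oplus 0=\{a\}$; each $a$ has a unique $-a$ with $0\in a\oplus(-a)$; and $c\in a\oplus b$ implies $b\in c\oplus(-a)$ and $a\in c\oplus(-b)$), $(\Re,\circ)$ is a commutative semigroup with identity $1\neq0$ and $a\circ 0=0$, and $\circ$ distributes over $\oplus$. A hyperideal is a nonempty $N\subseteq\Re$ with $a\oplus(-b)\subseteq N$ and $r\circ a\in N$ for all $a,b\in N$, $r\in\Re$; $L(\Re)$ is the set of hyperideals. For $I\in L(\Re)\cup\{\emptyset\}$ and $a\in\Re$, $(I:a)=\{x\in\Re: x\circ a\in I\}$. For hyperideals $K,L$, $K\circ L$ is the hyperideal generated by $\{k\circ l: k\in K,l\in L\}$.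 "$x\in N-\phi(N)$" means $x\in N$ and $x\notin\phi(N)$. A hyperideal $N$ is $\phi$-prime if for all $a,b\in\Re$, $a\circ b\in N-\phi(N)$ implies $a\in N$ or $b\in N$. *)

theory Defs
  imports Main
begin

definition hneg :: "('a \<Rightarrow> 'a \<Rightarrow> 'a set) \<Rightarrow> 'a \<Rightarrow> 'a \<Rightarrow> 'a" where
  "hneg add zero a = (THE b. zero \<in> add a b)"

definition canonical_hypergroup :: "('a \<Rightarrow> 'a \<Rightarrow> 'a set) \<Rightarrow> 'a \<Rightarrow> bool" where
  "canonical_hypergroup add zero \<longleftrightarrow>
     (\<forall>a b. add a b \<noteq> {}) \<and>
     (\<forall>a b c. (\<Union>x\<in>add a b. add x c) = (\<Union>x\<in>add b c. add a x)) \<and>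
     (\<forall>a b. add a b = add b a) \<and>
     (\<forall>a. add a zero = {a}) \<and>
     (\<forall>a. \<exists>!b. zero \<in> add a b) \<and>
     (\<forall>a b c. c \<in> add a b \<longrightarrow>
         b \<in> add c (hneg add zero a) \<and> a \<in> add c (hneg add zero b))"

definition comm_krasner_hyperring ::
  "('a \<Rightarrow> 'a \<Rightarrow> 'a set) \<Rightarrow> ('a \<Rightarrow> 'a \<Rightarrow> 'a) \<Rightarrow> 'a \<Rightarrow> 'a \<Rightarrow> bool" where
  "comm_krasner_hyperring add mult zero one \<longleftrightarrow>
     canonical_hypergroup add zero \<and>
     (\<forall>a b c. mult (mult a b) c = mult a (mult b c)) \<and>
     (\<forall>a b. mult a b = mult b a) \<and>
     (\<forall>a. mult a one = a) \<and>
     one \<noteq> zero \<and>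
     (\<forall>a. mult a zero = zero) \<and>
     (\<forall>r a b. mult r ` add a b = add (mult r a) (mult r b))"

definition hyperideal ::
  "('a \<Rightarrow> 'a \<Rightarrow> 'a set) \<Rightarrow> ('a \<Rightarrow> 'a \<Rightarrow> 'a) \<Rightarrow> 'a \<Rightarrow> 'a set \<Rightarrow> bool" where
  "hyperideal add mult zero N \<longleftrightarrow>
     N \<noteq> {} \<and>
     (\<forall>a\<in>N. \<forall>b\<in>N. add a (hneg add zero b) \<subseteq> N) \<and>
     (\<forall>r a. a \<in> N \<longrightarrow> mult r a \<in> N)"

definition hcolon :: "('a \<Rightarrow> 'a \<Rightarrow> 'a) \<Rightarrow> 'a set \<Rightarrow> 'a \<Rightarrow> 'a set" where
  "hcolon mult I a = {x. mult x a \<in> I}"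

definition hideal_prod ::
  "('a \<Rightarrow> 'a \<Rightarrow> 'a set) \<Rightarrow> ('a \<Rightarrow> 'a \<Rightarrow> 'a) \<Rightarrow> 'a \<Rightarrow> 'a set \<Rightarrow> 'a set \<Rightarrow> 'a set" where
  "hideal_prod add mult zero K L =
     \<Inter>{J. hyperideal add mult zero J \<and> {mult k l | k l. k \<in> K \<and> l \<in> L} \<subseteq> J}"

definition phi_prime ::
  "('a \<Rightarrow> 'a \<Rightarrow> 'a set) \<Rightarrow> ('a \<Rightarrow> 'a \<Rightarrow> 'a) \<Rightarrow> 'a \<Rightarrow> ('a set \<Rightarrow> 'a set) \<Rightarrow> 'a set \<Rightarrow> bool" where
  "phi_prime add mult zero phi N \<longleftrightarrow>
     hyperideal add mult zero N \<and>
     (\<forall>a b. mult a b \<in> N \<and> mult a b \<notin> phi N \<longrightarrow> a \<in> N \<or> b \<in> N)"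

end

theory Submission
  imports Defs
begin

context
  fixes add :: "'a \<Rightarrow> 'a \<Rightarrow> 'a set" and mult :: "'a \<Rightarrow> 'a \<Rightarrow> 'a"
    and zero one :: 'a
  assumes R: "comm_krasner_hyperring add mult zero one"
begin

lemma CH: "canonical_hypergroup add zero"
  using R unfolding comm_krasner_hyperring_def by (rule conjunct1)

lemmas CHd = CH[unfolded canonical_hypergroup_def]

lemma add_ne: "add a b \<noteq> {}"
  using CHd[THEN conjunct1] by iprover
lemma add_comm: "add a b = add b a"
  using CHd[THEN conjunct2, THEN conjunct2, THEN conjunct1] by iprover
lemma add_zero: "add a zero = {a}"
  using CHd[THEN conjunct2, THEN conjunct2, THEN conjunct2, THEN conjunct1] by iprover
lemma ex1_neg: "\<exists>!b. zero \<in> add a b"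
  using CHd[THEN conjunct2, THEN conjunct2, THEN conjunct2, THEN conjunct2, THEN conjunct1] by iprover
lemma hneg_in: "zero \<in> add a (hneg add zero a)"
  unfolding hneg_def using ex1_neg[of a] by (rule theI')
lemma hneg_uniq: "zero \<in> add a b \<Longrightarrow> b = hneg add zero a"
  using ex1_neg[of a] hneg_in[of a] by blast
lemma rev_both: "c \<in> add a b \<Longrightarrow> b \<in> add c (hneg add zero a) \<and> a \<in> add c (hneg add zero b)"
  using CHd[THEN conjunct2, THEN conjunct2, THEN conjunct2, THEN conjunct2, THEN conjunct2] by iprover
lemma rev1: "c \<in> add a b \<Longrightarrow> b \<in> add c (hneg add zero a)"
  using rev_both by iprover
lemma rev2: "c \<in> add a b \<Longrightarrow> a \<in> add c (hneg add zero b)"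
  using rev_both by iprover
lemma hneg_hneg: "hneg add zero (hneg add zero q) = q"
  using hneg_in[of q] add_comm hneg_uniq by metis

lemmas Rd = R[unfolded comm_krasner_hyperring_def, THEN conjunct2]

lemma massoc: "mult (mult a b) c = mult a (mult b c)"
  using Rd[THEN conjunct1] by iprover
lemma mcomm: "mult a b = mult b a"
  using Rd[THEN conjunct2, THEN conjunct1] by iprover
lemma mone: "mult a one = a"
  using Rd[THEN conjunct2, THEN conjunct2, THEN conjunct1] by iprover
lemma mzero: "mult a zero = zero"
  using Rd[THEN conjunct2, THEN conjunct2, THEN conjunct2, THEN conjunct2, THEN conjunct1] by iprover
lemma distr: "mult r ` add a b = add (mult r a) (mult r b)"
  using Rd[THEN conjunct2, THEN conjunct2, THEN conjunct2, THEN conjunct2, THEN conjunct2] by iprover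

lemma hneg_mult: "hneg add zero (mult a s) = mult a (hneg add zero s)"
proof -
  have "zero \<in> mult a ` add s (hneg add zero s)"
    using hneg_in[of s] mzero[of a] by force
  then have "zero \<in> add (mult a s) (mult a (hneg add zero s))" using distr by simp
  then show ?thesis using hneg_uniq by simp
qed

lemma mult_mem_add: "z \<in> add x y \<Longrightarrow> mult z a \<in> add (mult x a) (mult y a)"
  using distr[of a x y] mcomm by (metis image_eqI)

lemma id_zero: "hyperideal add mult zero I \<Longrightarrow> zero \<in> I"
  unfolding hyperideal_def using mzero mcomm by (metis all_not_in_conv)

lemma id_sub: "hyperideal add mult zero I \<Longrightarrow> p \<in> I \<Longrightarrow> q \<in> I \<Longrightarrow> add p (hneg add zero q) \<subseteq> I"
  unfolding hyperideal_def by blast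

lemma id_neg: "hyperideal add mult zero I \<Longrightarrow> q \<in> I \<Longrightarrow> hneg add zero q \<in> I"
  using id_sub[of I zero q] id_zero add_comm add_zero by (metis insert_subset)

lemma id_add: "hyperideal add mult zero I \<Longrightarrow> p \<in> I \<Longrightarrow> q \<in> I \<Longrightarrow> add p q \<subseteq> I"
  using id_sub[of I p "hneg add zero q"] id_neg hneg_hneg by metis

lemma id_mult: "hyperideal add mult zero I \<Longrightarrow> a \<in> I \<Longrightarrow> mult r a \<in> I"
  unfolding hyperideal_def by blast

lemma principal: "hyperideal add mult zero {mult r a | r. True}"
proof -
  have "add u (hneg add zero v) \<subseteq> {mult r a | r. True}"
    if uv: "u \<in> {mult r a | r. True}" "v \<in> {mult r a | r. True}" for u v
  proof -
    obtain r s where u: "u = mult r a" and v: "v = mult s a" using uv by blast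
    have "add u (hneg add zero v) = add (mult a r) (mult a (hneg add zero s))"
      using u v hneg_mult mcomm by metis
    also have "\<dots> = mult a ` add r (hneg add zero s)" using distr by simp
    finally show ?thesis using mcomm by auto
  qed
  moreover have "mult t x \<in> {mult r a | r. True}" if xin: "x \<in> {mult r a | r. True}" for t x
  proof -
    obtain r where "x = mult r a" using xin by blast
    then have "mult t x = mult (mult t r) a" using massoc by simp
    then show ?thesis by blast
  qed
  ultimately show ?thesis unfolding hyperideal_def by blast
qed

lemma prod_mem: "k \<in> K \<Longrightarrow> l \<in> L \<Longrightarrow> mult k l \<in> hideal_prod add mult zero K L"
  unfolding hideal_prod_def by blast

lemma prod_sub: "hyperideal add mult zero J \<Longrightarrow> (\<And>k l. k \<in> K \<Longrightarrow> l \<in> L \<Longrightarrow> mult k l \<in> J)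
   \<Longrightarrow> hideal_prod add mult zero K L \<subseteq> J"
  unfolding hideal_prod_def by blast


lemma colon_sub: "hyperideal add mult zero N \<Longrightarrow> P \<subseteq> N \<Longrightarrow>
   N \<union> hcolon mult P a \<subseteq> hcolon mult N a"
proof -
  assume N: "hyperideal add mult zero N" and P: "P \<subseteq> N"
  have "mult x a \<in> N" if "x \<in> N" for x
    using id_mult[OF N that, of a] mcomm by metis
  then show ?thesis using P unfolding hcolon_def by blast
qed

lemma step_i_ii:
  assumes N: "hyperideal add mult zero N" and phiN: "phi N \<subseteq> N"
  shows "phi_prime add mult zero phi N
           \<longleftrightarrow> (\<forall>a. a \<notin> N \<longrightarrow> hcolon mult N a = N \<union> hcolon mult (phi N) a)"
proof
  assume P: "phi_prime add mult zero phi N"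
  show "\<forall>a. a \<notin> N \<longrightarrow> hcolon mult N a = N \<union> hcolon mult (phi N) a"
  proof (intro allI impI)
    fix a assume a: "a \<notin> N"
    have "hcolon mult N a \<subseteq> N \<union> hcolon mult (phi N) a"
      using P a unfolding phi_prime_def hcolon_def by blast
    then show "hcolon mult N a = N \<union> hcolon mult (phi N) a"
      using colon_sub[OF N phiN] by blast
  qed
next
  assume H: "\<forall>a. a \<notin> N \<longrightarrow> hcolon mult N a = N \<union> hcolon mult (phi N) a"
  show "phi_prime add mult zero phi N"
    unfolding phi_prime_def
  proof (intro conjI N allI impI)
    fix a b assume ab: "mult a b \<in> N \<and> mult a b \<notin> phi N"
    show "a \<in> N \<or> b \<in> N"
    proof (cases "b \<in> N")
      case False
      have "a \<in> hcolon mult N b" using ab unfolding hcolon_def by simp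
      then show ?thesis using H False ab unfolding hcolon_def by blast
    qed simp
  qed
qed

lemma step_i_iii:
  assumes N: "hyperideal add mult zero N" and phiN: "phi N \<subseteq> N"
    and phi: "\<forall>I. hyperideal add mult zero I \<longrightarrow> hyperideal add mult zero (phi I) \<or> phi I = {}"
  shows "phi_prime add mult zero phi N
           \<longleftrightarrow> (\<forall>a. a \<notin> N \<longrightarrow> hcolon mult N a = N \<or> hcolon mult N a = hcolon mult (phi N) a)"
proof
  assume P: "phi_prime add mult zero phi N"
  show "\<forall>a. a \<notin> N \<longrightarrow> hcolon mult N a = N \<or> hcolon mult N a = hcolon mult (phi N) a"
  proof (intro allI impI)
    fix a assume a: "a \<notin> N"
    show "hcolon mult N a = N \<or> hcolon mult N a = hcolon mult (phi N) a"
    proof (cases "hcolon mult N a \<subseteq> N")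
      case True
      then show ?thesis using colon_sub[OF N phiN, of a] by blast
    next
      case False
      then obtain x where x: "mult x a \<in> N" "x \<notin> N" unfolding hcolon_def by blast
      then have xphi: "mult x a \<in> phi N" using P a unfolding phi_prime_def by blast
      then have Iphi: "hyperideal add mult zero (phi N)" using phi N by blast
      have "y \<in> hcolon mult (phi N) a" if y: "y \<in> hcolon mult N a" for y
      proof (cases "y \<in> N")
        case False
        then show ?thesis using P a y unfolding phi_prime_def hcolon_def by blast
      next
        case True
        obtain z where z: "z \<in> add x y" using add_ne by blast
        have ya: "mult y a \<in> N" using y unfolding hcolon_def by simp
        have za: "mult z a \<in> N" using mult_mem_add[OF z, of a] id_add[OF N x(1) ya] by blast
        have "z \<notin> N"
        proof
          assume zN: "z \<in> N"
          then have "x \<in> N" using rev2[OF z] id_sub[OF N zN True] by blast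
          then show False using x by simp
        qed
        then have zphi: "mult z a \<in> phi N" using P a za unfolding phi_prime_def by blast
        have "mult y a \<in> add (mult z a) (hneg add zero (mult x a))"
          using rev1[OF mult_mem_add[OF z, of a]] .
        then have "mult y a \<in> phi N" using id_sub[OF Iphi zphi xphi] by blast
        then show ?thesis unfolding hcolon_def by simp
      qed
      then show ?thesis using colon_sub[OF N phiN, of a] by blast
    qed
  qed
next
  assume H: "\<forall>a. a \<notin> N \<longrightarrow> hcolon mult N a = N \<or> hcolon mult N a = hcolon mult (phi N) a"
  show "phi_prime add mult zero phi N"
    unfolding phi_prime_def
  proof (intro conjI N allI impI)
    fix a b assume ab: "mult a b \<in> N \<and> mult a b \<notin> phi N"
    show "a \<in> N \<or> b \<in> N"
    proof (cases "b \<in> N")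
      case False
      have "a \<in> hcolon mult N b" using ab unfolding hcolon_def by simp
      then show ?thesis using H False ab unfolding hcolon_def by blast
    qed simp
  qed
qed

lemma step_i_iv:
  assumes N: "hyperideal add mult zero N" and phiN: "phi N \<subseteq> N"
    and phi: "\<forall>I. hyperideal add mult zero I \<longrightarrow> hyperideal add mult zero (phi I) \<or> phi I = {}"
  shows "phi_prime add mult zero phi N
           \<longleftrightarrow> (\<forall>K L. hyperideal add mult zero K \<and> hyperideal add mult zero L \<and>
                   hideal_prod add mult zero K L \<subseteq> N \<and> \<not> hideal_prod add mult zero K L \<subseteq> phi N
                   \<longrightarrow> K \<subseteq> N \<or> L \<subseteq> N)"
proof
  assume P: "phi_prime add mult zero phi N"
  have C: "\<forall>a. a \<notin> N \<longrightarrow> hcolon mult N a = N \<or> hcolon mult N a = hcolon mult (phi N) a"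
    using step_i_iii[OF N phiN phi] P by blast
  show "\<forall>K L. hyperideal add mult zero K \<and> hyperideal add mult zero L \<and>
                   hideal_prod add mult zero K L \<subseteq> N \<and> \<not> hideal_prod add mult zero K L \<subseteq> phi N
                   \<longrightarrow> K \<subseteq> N \<or> L \<subseteq> N"
  proof (intro allI impI)
    fix K L assume A: "hyperideal add mult zero K \<and> hyperideal add mult zero L \<and>
                   hideal_prod add mult zero K L \<subseteq> N \<and> \<not> hideal_prod add mult zero K L \<subseteq> phi N"
    then have K: "hyperideal add mult zero K" and L: "hyperideal add mult zero L"
      and KL: "\<And>k l. k \<in> K \<Longrightarrow> l \<in> L \<Longrightarrow> mult k l \<in> N"
      using prod_mem by blast+
    show "K \<subseteq> N \<or> L \<subseteq> N"
    proof (rule ccontr)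
      assume "\<not> (K \<subseteq> N \<or> L \<subseteq> N)"
      then obtain k1 l1 where k1: "k1 \<in> K" "k1 \<notin> N" and l1: "l1 \<in> L" "l1 \<notin> N" by blast
      have k1l1: "mult k1 l1 \<in> phi N" using P KL k1 l1 unfolding phi_prime_def by blast
      then have Iphi: "hyperideal add mult zero (phi N)" using phi N by blast
      have colk: "hcolon mult N k = hcolon mult (phi N) k" if "k \<in> K" "k \<notin> N" for k
      proof -
        have "l1 \<in> hcolon mult N k" using KL[OF that(1) l1(1)] mcomm[of l1 k] unfolding hcolon_def by simp
        then show ?thesis using C that l1 by blast
      qed
      have coll: "hcolon mult N l = hcolon mult (phi N) l" if "l \<in> L" "l \<notin> N" for l
      proof -
        have "k1 \<in> hcolon mult N l" using KL[OF k1(1) that(1)] unfolding hcolon_def by simp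
        then show ?thesis using C that k1 by blast
      qed
      have all: "mult k l \<in> phi N" if k: "k \<in> K" and l: "l \<in> L" for k l
      proof (cases "k \<in> N")
        case kN: True
        show ?thesis
        proof (cases "l \<in> N")
          case lN: True
          obtain z where z: "z \<in> add k k1" using add_ne by blast
          have zK: "z \<in> K" using id_add[OF K k k1(1)] z by blast
          have "z \<notin> N"
          proof
            assume zN: "z \<in> N"
            then have "k1 \<in> N" using rev1[OF z] id_sub[OF N zN kN] by blast
            then show False using k1 by simp
          qed
          then have "hcolon mult N z = hcolon mult (phi N) z" using colk zK by blast
          moreover have "l \<in> hcolon mult N z" using id_mult[OF N lN, of z] mcomm[of z l] unfolding hcolon_def by simp
          ultimately have zl: "mult z l \<in> phi N" unfolding hcolon_def using mcomm[of z l] by simp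
          have "hcolon mult N k1 = hcolon mult (phi N) k1" using colk k1 by blast
          moreover have "l \<in> hcolon mult N k1" using id_mult[OF N lN, of k1] mcomm[of k1 l] unfolding hcolon_def by simp
          ultimately have k1l: "mult k1 l \<in> phi N" unfolding hcolon_def using mcomm[of k1 l] by simp
          have "mult k l \<in> add (mult z l) (hneg add zero (mult k1 l))"
            using rev2[OF mult_mem_add[OF z, of l]] .
          then show ?thesis using id_sub[OF Iphi zl k1l] by blast
        next
          case False
          then have "hcolon mult N l = hcolon mult (phi N) l" using coll l by blast
          moreover have "k \<in> hcolon mult N l" using id_mult[OF N kN, of l] mcomm[of k l] unfolding hcolon_def by simp
          ultimately show ?thesis unfolding hcolon_def by blast
        qed
      next
        case knN: False
        show ?thesis
        proof (cases "l \<in> N")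
          case True
          have "hcolon mult N k = hcolon mult (phi N) k" using colk k knN by blast
          moreover have "l \<in> hcolon mult N k" using id_mult[OF N True, of k] mcomm[of k l] unfolding hcolon_def by simp
          ultimately show ?thesis unfolding hcolon_def using mcomm[of k l] by simp
        next
          case False
          then show ?thesis using P KL[OF k l] knN unfolding phi_prime_def by blast
        qed
      qed
      have "hideal_prod add mult zero K L \<subseteq> phi N" using prod_sub[OF Iphi] all by blast
      then show False using A by blast
    qed
  qed
next
  assume H: "\<forall>K L. hyperideal add mult zero K \<and> hyperideal add mult zero L \<and>
                   hideal_prod add mult zero K L \<subseteq> N \<and> \<not> hideal_prod add mult zero K L \<subseteq> phi N
                   \<longrightarrow> K \<subseteq> N \<or> L \<subseteq> N"
  show "phi_prime add mult zero phi N"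
    unfolding phi_prime_def
  proof (intro conjI N allI impI)
    fix a b assume ab: "mult a b \<in> N \<and> mult a b \<notin> phi N"
    define K where "K = {mult r a | r. True}"
    define L where "L = {mult r b | r. True}"
    have K: "hyperideal add mult zero K" unfolding K_def by (rule principal)
    have L: "hyperideal add mult zero L" unfolding L_def by (rule principal)
    have "a = mult one a" using mone[of a] mcomm[of a one] by simp
    then have aK: "a \<in> K" unfolding K_def by blast
    have "b = mult one b" using mone[of b] mcomm[of b one] by simp
    then have bL: "b \<in> L" unfolding L_def by blast
    have "mult k l \<in> N" if kl: "k \<in> K" "l \<in> L" for k l
    proof -
      obtain r s where "k = mult r a" "l = mult s b" using kl unfolding K_def L_def by blast
      moreover have "mult (mult r a) (mult s b) = mult (mult r s) (mult a b)"
      using massoc[of r a "mult s b"] massoc[of a s b] mcomm[of a s] massoc[of s a b] massoc[of r s "mult a b"]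
      by simp
    ultimately have "mult k l = mult (mult r s) (mult a b)" by simp
      then show ?thesis using id_mult[OF N] ab by simp
    qed
    then have "hideal_prod add mult zero K L \<subseteq> N" using prod_sub[OF N] by blast
    moreover have "\<not> hideal_prod add mult zero K L \<subseteq> phi N" using prod_mem[OF aK bL] ab by blast
    ultimately have "K \<subseteq> N \<or> L \<subseteq> N" using H K L by blast
    then show "a \<in> N \<or> b \<in> N" using aK bL by blast
  qed
qed

end

theorem mainTheorem1:
  fixes add :: "'a \<Rightarrow> 'a \<Rightarrow> 'a set" and mult :: "'a \<Rightarrow> 'a \<Rightarrow> 'a"
    and zero one :: 'a and phi :: "'a set \<Rightarrow> 'a set" and N :: "'a set"
  assumes R: "comm_krasner_hyperring add mult zero one"
    and N: "hyperideal add mult zero N" and proper: "N \<noteq> UNIV"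
    and phi: "\<forall>I. hyperideal add mult zero I \<longrightarrow> hyperideal add mult zero (phi I) \<or> phi I = {}"
    and phiN: "phi N \<subseteq> N"
  shows "(phi_prime add mult zero phi N
           \<longleftrightarrow> (\<forall>a. a \<notin> N \<longrightarrow> hcolon mult N a = N \<union> hcolon mult (phi N) a))
       \<and> (phi_prime add mult zero phi N
           \<longleftrightarrow> (\<forall>a. a \<notin> N \<longrightarrow> hcolon mult N a = N \<or> hcolon mult N a = hcolon mult (phi N) a))
       \<and> (phi_prime add mult zero phi N
           \<longleftrightarrow> (\<forall>K L. hyperideal add mult zero K \<and> hyperideal add mult zero L \<and>
                   hideal_prod add mult zero K L \<subseteq> N \<and> \<not> hideal_prod add mult zero K L \<subseteq> phi N
                   \<longrightarrow> K \<subseteq> N \<or> L \<subseteq> N))"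
proof (intro conjI)
  show "phi_prime add mult zero phi N
           \<longleftrightarrow> (\<forall>a. a \<notin> N \<longrightarrow> hcolon mult N a = N \<union> hcolon mult (phi N) a)"
    by (rule step_i_ii[where phi=phi, OF R N phiN])
  show "phi_prime add mult zero phi N
           \<longleftrightarrow> (\<forall>a. a \<notin> N \<longrightarrow> hcolon mult N a = N \<or> hcolon mult N a = hcolon mult (phi N) a)"
    by (rule step_i_iii[where phi=phi, OF R N phiN phi])
  show "phi_prime add mult zero phi N
           \<longleftrightarrow> (\<forall>K L. hyperideal add mult zero K \<and> hyperideal add mult zero L \<and>
                   hideal_prod add mult zero K L \<subseteq> N \<and> \<not> hideal_prod add mult zero K L \<subseteq> phi N
                   \<longrightarrow> K \<subseteq> N \<or> L \<subseteq> N)"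
    by (rule step_i_iv[where phi=phi, OF R N phiN phi])
qed

end
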